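(* Let $L$ be a Lie algebra over a field $K$ of characteristic different from $2$ and $3$, and let $I$ be an ideal of $L$ of codimension $1$ which is perfect, i.e. $[I,I]=I$. Then there is an injective linear map $Z^2_{comm}(L)\to Z^2_{comm}(I)\oplus K$, where the summand $K$ corresponds to the trivial cocycle $\varphi$ defined by $\varphi(x,x)=1$, $\varphi(I,I)=\varphi(I,x)=0$ for a fixed $x\in L\setminus I$.
   Context: $Z^2_{comm}(L)$ is the space of symmetric bilinear forms $\varphi:L\times L\to K$ with $\varphi([x,y],z)+\varphi([z,x],y)+\varphi([y,z],x)=0$ for all $x,y,z\in L$. *)

theory Defs
  imports Complex_Main
begin

definition lie_algebra :: "('k::field \<Rightarrow> 'v::ab_group_add \<Rightarrow> 'v) \<Rightarrow> ('v \<Rightarrow> 'v \<Rightarrow> 'v) \<Rightarrow> bool" where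
  "lie_algebra sc br \<longleftrightarrow> vector_space sc
     \<and> (\<forall>x y z. br (x + y) z = br x z + br y z)
     \<and> (\<forall>x y z. br x (y + z) = br x y + br x z)
     \<and> (\<forall>c x y. br (sc c x) y = sc c (br x y))
     \<and> (\<forall>c x y. br x (sc c y) = sc c (br x y))
     \<and> (\<forall>x. br x x = 0)
     \<and> (\<forall>x y z. br x (br y z) + br y (br z x) + br z (br x y) = 0)"

definition lie_ideal :: "('k::field \<Rightarrow> 'v::ab_group_add \<Rightarrow> 'v) \<Rightarrow> ('v \<Rightarrow> 'v \<Rightarrow> 'v) \<Rightarrow> 'v set \<Rightarrow> bool" where
  "lie_ideal sc br I \<longleftrightarrow> module.subspace sc I \<and> (\<forall>x y. y \<in> I \<longrightarrow> br x y \<in> I)"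

definition codim_one :: "('k::field \<Rightarrow> 'v::ab_group_add \<Rightarrow> 'v) \<Rightarrow> 'v set \<Rightarrow> bool" where
  "codim_one sc I \<longleftrightarrow> (\<exists>x. x \<notin> I \<and> (\<forall>v. \<exists>i\<in>I. \<exists>c. v = i + sc c x))"

definition perfect :: "('k::field \<Rightarrow> 'v::ab_group_add \<Rightarrow> 'v) \<Rightarrow> ('v \<Rightarrow> 'v \<Rightarrow> 'v) \<Rightarrow> 'v set \<Rightarrow> bool" where
  "perfect sc br I \<longleftrightarrow> module.span sc {br a b | a b. a \<in> I \<and> b \<in> I} = I"

text \<open>Z^2_comm of the Lie algebra S (S = UNIV for L, S = I for an ideal):
symmetric bilinear forms on S satisfying the cyclic condition; for definiteness
the form is required to vanish outside S \<times> S, so forms on I are determined by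
their values on I \<times> I.\<close>
definition Z2comm :: "('k::field \<Rightarrow> 'v::ab_group_add \<Rightarrow> 'v) \<Rightarrow> ('v \<Rightarrow> 'v \<Rightarrow> 'v) \<Rightarrow> 'v set \<Rightarrow> ('v \<Rightarrow> 'v \<Rightarrow> 'k) set" where
  "Z2comm sc br S = {\<phi>.
     (\<forall>a\<in>S. \<forall>b\<in>S. \<forall>c\<in>S. \<phi> (a + b) c = \<phi> a c + \<phi> b c)
   \<and> (\<forall>t. \<forall>a\<in>S. \<forall>b\<in>S. \<phi> (sc t a) b = t * \<phi> a b)
   \<and> (\<forall>a\<in>S. \<forall>b\<in>S. \<phi> a b = \<phi> b a)
   \<and> (\<forall>x\<in>S. \<forall>y\<in>S. \<forall>z\<in>S. \<phi> (br x y) z + \<phi> (br z x) y + \<phi> (br y z) x = 0)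
   \<and> (\<forall>a b. \<not> (a \<in> S \<and> b \<in> S) \<longrightarrow> \<phi> a b = 0)}"


text \<open>For x \<notin> I with L = I + Kx, the coefficient of v along x, and the trivial
cocycle phi_x with phi_x(x,x) = 1, phi_x(I,I) = phi_x(I,x) = 0, i.e.
phi_x(a,b) = coeff(a) * coeff(b).\<close>
definition x_coeff :: "('k::field \<Rightarrow> 'v::ab_group_add \<Rightarrow> 'v) \<Rightarrow> 'v set \<Rightarrow> 'v \<Rightarrow> 'v \<Rightarrow> 'k" where
  "x_coeff sc I x v = (THE c. v - sc c x \<in> I)"

definition trivial_cocycle :: "('k::field \<Rightarrow> 'v::ab_group_add \<Rightarrow> 'v) \<Rightarrow> 'v set \<Rightarrow> 'v \<Rightarrow> 'v \<Rightarrow> 'v \<Rightarrow> 'k" where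
  "trivial_cocycle sc I x a b = x_coeff sc I x a * x_coeff sc I x b"

end

theory Submission
  imports Defs
begin

lemma decomp_x:
  fixes sc :: "'k::field \<Rightarrow> 'v::ab_group_add \<Rightarrow> 'v"
  assumes m: "module sc" and sI: "module.subspace sc I" and co: "codim_one sc I" and x: "x \<notin> I"
  shows "\<exists>i\<in>I. \<exists>c. v = i + sc c x"
proof -
  interpret module sc by (rule m)
  obtain x0 where x0: "x0 \<notin> I" and H: "\<forall>v. \<exists>i\<in>I. \<exists>c. v = i + sc c x0"
    using co unfolding codim_one_def by blast
  obtain i0 c0 where i0: "i0 \<in> I" and xe: "x = i0 + sc c0 x0" using H by blast
  have c0: "c0 \<noteq> 0" using xe i0 x by auto
  have x0e: "x0 = sc (inverse c0) (x - i0)"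
    using xe c0 by (simp add: scale_right_diff_distrib)
  obtain i c where i: "i \<in> I" and ve: "v = i + sc c x0" using H by blast
  have "v = (i - sc (c * inverse c0) i0) + sc (c * inverse c0) x"
    using ve x0e by (simp add: scale_right_diff_distrib)
  moreover have "i - sc (c * inverse c0) i0 \<in> I"
    using sI i i0 by (simp add: subspace_diff subspace_scale)
  ultimately show ?thesis by blast
qed

lemma phi_zero:
  fixes \<phi> :: "'v::ab_group_add \<Rightarrow> 'v \<Rightarrow> 'k::field"
  assumes "\<phi> (0 + 0) w = \<phi> 0 w + \<phi> 0 w"
  shows "\<phi> 0 w = 0"
  using assms by (metis add.right_neutral add_left_cancel)

theorem lemma5p2:
  fixes sc :: "'k::field \<Rightarrow> 'v::ab_group_add \<Rightarrow> 'v"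
    and br :: "'v \<Rightarrow> 'v \<Rightarrow> 'v"
    and I :: "'v set"
  assumes "lie_algebra sc br"
    and "(2::'k) \<noteq> 0" and "(3::'k) \<noteq> 0"
    and "lie_ideal sc br I"
    and "codim_one sc I"
    and "perfect sc br I"
  shows "\<forall>x. x \<notin> I \<longrightarrow>
    (\<exists>T :: ('v \<Rightarrow> 'v \<Rightarrow> 'k) \<Rightarrow> ('v \<Rightarrow> 'v \<Rightarrow> 'k) \<times> 'k.
        (\<forall>\<phi>\<in>Z2comm sc br UNIV. T \<phi> \<in> Z2comm sc br I \<times> UNIV)
      \<and> (\<forall>\<phi>\<in>Z2comm sc br UNIV. \<forall>\<psi>\<in>Z2comm sc br UNIV.
            T (\<lambda>a b. \<phi> a b + \<psi> a b) =
              ((\<lambda>a b. fst (T \<phi>) a b + fst (T \<psi>) a b), snd (T \<phi>) + snd (T \<psi>)))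
      \<and> (\<forall>t. \<forall>\<phi>\<in>Z2comm sc br UNIV.
            T (\<lambda>a b. t * \<phi> a b) = ((\<lambda>a b. t * fst (T \<phi>) a b), t * snd (T \<phi>)))
      \<and> inj_on T (Z2comm sc br UNIV)
      \<and> T (trivial_cocycle sc I x) = ((\<lambda>a b. 0), 1))"
proof (intro allI impI)
  fix x assume x: "x \<notin> I"
  have vs: "vector_space sc" using assms(1) unfolding lie_algebra_def by blast
  then have m: "module sc" by (simp add: module_iff_vector_space)
  interpret module sc by (rule m)
  have sI: "subspace I" and ideal: "\<And>a b. b \<in> I \<Longrightarrow> br a b \<in> I"
    using assms(4) unfolding lie_ideal_def by auto
  have bradd: "\<And>a b c. br (a + b) c = br a c + br b c" and bradd2: "\<And>a b c. br a (b + c) = br a b + br a c"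
    and brxx: "\<And>a. br a a = 0"
    using assms(1) unfolding lie_algebra_def by auto
  have anti: "br b a = - br a b" for a b
  proof -
    have "br (a + b) (a + b) = 0" by (rule brxx)
    moreover have "br (a + b) (a + b) = br a a + br a b + (br b a + br b b)"
      by (simp add: bradd bradd2 add.assoc)
    ultimately have "br a b + br b a = 0" by (simp add: brxx)
    then show ?thesis by (simp add: eq_neg_iff_add_eq_0 add.commute)
  qed
  have brI: "a \<in> I \<Longrightarrow> br a b \<in> I" for a b
    using anti ideal subspace_neg[OF sI] minus_minus by metis
  define T :: "('v \<Rightarrow> 'v \<Rightarrow> 'k) \<Rightarrow> ('v \<Rightarrow> 'v \<Rightarrow> 'k) \<times> 'k" where
    "T = (\<lambda>\<phi>. ((\<lambda>a b. if a \<in> I \<and> b \<in> I then \<phi> a b else 0), \<phi> x x))"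
  have P1: "\<forall>\<phi>\<in>Z2comm sc br UNIV. T \<phi> \<in> Z2comm sc br I \<times> UNIV"
  proof
    fix \<phi> assume "\<phi> \<in> Z2comm sc br UNIV"
    then show "T \<phi> \<in> Z2comm sc br I \<times> UNIV"
      unfolding T_def Z2comm_def
      using subspace_add[OF sI] subspace_scale[OF sI] ideal by auto
  qed
  have P2: "\<forall>\<phi>\<in>Z2comm sc br UNIV. \<forall>\<psi>\<in>Z2comm sc br UNIV.
            T (\<lambda>a b. \<phi> a b + \<psi> a b) =
              ((\<lambda>a b. fst (T \<phi>) a b + fst (T \<psi>) a b), snd (T \<phi>) + snd (T \<psi>))"
    unfolding T_def by (auto simp: fun_eq_iff)
  have P3: "\<forall>t. \<forall>\<phi>\<in>Z2comm sc br UNIV.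
            T (\<lambda>a b. t * \<phi> a b) = ((\<lambda>a b. t * fst (T \<phi>) a b), t * snd (T \<phi>))"
    unfolding T_def by (auto simp: fun_eq_iff)
  have P4: "inj_on T (Z2comm sc br UNIV)"
  proof (rule inj_onI)
    fix \<phi> \<psi> assume p: "\<phi> \<in> Z2comm sc br UNIV" and q: "\<psi> \<in> Z2comm sc br UNIV" and e: "T \<phi> = T \<psi>"
    have padd: "\<And>a b c. \<phi> (a + b) c = \<phi> a c + \<phi> b c" and psc: "\<And>t a b. \<phi> (sc t a) b = t * \<phi> a b"
      and psym: "\<And>a b. \<phi> a b = \<phi> b a"
      and pcyc: "\<And>a b c. \<phi> (br a b) c + \<phi> (br c a) b + \<phi> (br b c) a = 0"
      using p unfolding Z2comm_def by auto
    have qadd: "\<And>a b c. \<psi> (a + b) c = \<psi> a c + \<psi> b c" and qsc: "\<And>t a b. \<psi> (sc t a) b = t * \<psi> a b"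
      and qsym: "\<And>a b. \<psi> a b = \<psi> b a"
      and qcyc: "\<And>a b c. \<psi> (br a b) c + \<psi> (br c a) b + \<psi> (br b c) a = 0"
      using q unfolding Z2comm_def by auto
    have eI: "\<phi> a b = \<psi> a b" if "a \<in> I" "b \<in> I" for a b
      using e that unfolding T_def by (simp add: fun_eq_iff) (metis (full_types))
    have exx: "\<phi> x x = \<psi> x x" using e unfolding T_def by simp
    define S where "S = {v. \<phi> v x = \<psi> v x}"
    have "subspace S"
    proof (rule subspaceI)
      show "0 \<in> S" unfolding S_def using phi_zero[of \<phi>, OF padd] phi_zero[of \<psi>, OF qadd] by simp
    next
      fix a b assume "a \<in> S" "b \<in> S" then show "a + b \<in> S" unfolding S_def by (simp add: padd qadd)
    next
      fix c a assume "a \<in> S" then show "sc c a \<in> S" unfolding S_def by (simp add: psc qsc)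
    qed
    moreover have "{br a b | a b. a \<in> I \<and> b \<in> I} \<subseteq> S"
    proof clarify
      fix a b assume a: "a \<in> I" and b: "b \<in> I"
      have "\<phi> (br a b) x = - (\<phi> (br x a) b + \<phi> (br b x) a)"
        using pcyc[of a b x] by (metis add.assoc eq_neg_iff_add_eq_0)
      moreover have "\<psi> (br a b) x = - (\<psi> (br x a) b + \<psi> (br b x) a)"
        using qcyc[of a b x] by (metis add.assoc eq_neg_iff_add_eq_0)
      moreover have "br x a \<in> I" "br b x \<in> I" using ideal[OF a] brI[OF b] by auto
      ultimately show "br a b \<in> S" unfolding S_def using eI a b by simp
    qed
    ultimately have "span {br a b | a b. a \<in> I \<and> b \<in> I} \<subseteq> S" by (rule span_minimal[rotated])
    then have ix: "\<And>i. i \<in> I \<Longrightarrow> \<phi> i x = \<psi> i x"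
      using assms(6) unfolding perfect_def S_def by auto
    have "\<phi> v w = \<psi> v w" for v w
    proof -
      obtain i c where i: "i \<in> I" and v: "v = i + sc c x" using decomp_x[OF m sI assms(5) x] by blast
      obtain j d where j: "j \<in> I" and w: "w = j + sc d x" using decomp_x[OF m sI assms(5) x] by blast
      have "\<phi> v w = \<phi> i j + d * \<phi> i x + c * (\<phi> j x + d * \<phi> x x)"
      proof -
        have h1: "\<phi> v w = \<phi> i w + c * \<phi> x w" unfolding v by (simp add: padd psc)
        have h2: "\<phi> i w = \<phi> w i" by (rule psym)
        have h3: "\<phi> w i = \<phi> j i + d * \<phi> x i" unfolding w by (simp add: padd psc)
        have h4: "\<phi> x w = \<phi> w x" by (rule psym)
        have h5: "\<phi> w x = \<phi> j x + d * \<phi> x x" unfolding w by (simp add: padd psc)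
        have h6: "\<phi> j i = \<phi> i j" "\<phi> x i = \<phi> i x" by (rule psym)+
        show ?thesis unfolding h1 h2 h3 h4 h5 h6 ..
      qed
      moreover have "\<psi> v w = \<psi> i j + d * \<psi> i x + c * (\<psi> j x + d * \<psi> x x)"
      proof -
        have h1: "\<psi> v w = \<psi> i w + c * \<psi> x w" unfolding v by (simp add: qadd qsc)
        have h2: "\<psi> i w = \<psi> w i" by (rule qsym)
        have h3: "\<psi> w i = \<psi> j i + d * \<psi> x i" unfolding w by (simp add: qadd qsc)
        have h4: "\<psi> x w = \<psi> w x" by (rule qsym)
        have h5: "\<psi> w x = \<psi> j x + d * \<psi> x x" unfolding w by (simp add: qadd qsc)
        have h6: "\<psi> j i = \<psi> i j" "\<psi> x i = \<psi> i x" by (rule qsym)+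
        show ?thesis unfolding h1 h2 h3 h4 h5 h6 ..
      qed
      ultimately show ?thesis using eI[OF i j] ix[OF i] ix[OF j] exx by simp
    qed
    then show "\<phi> = \<psi>" by (simp add: fun_eq_iff)
  qed
  have coef: "x_coeff sc I x v = c" if "v - sc c x \<in> I" for v c
    unfolding x_coeff_def
  proof (rule the_equality)
    show "v - sc c x \<in> I" by (rule that)
  next
    fix d assume "v - sc d x \<in> I"
    then have "(v - sc d x) - (v - sc c x) \<in> I" using that subspace_diff[OF sI] by blast
    then have h: "sc (c - d) x \<in> I" by (simp add: scale_left_diff_distrib)
    show "d = c"
    proof (rule ccontr)
      assume "d \<noteq> c"
      then have "sc (inverse (c - d)) (sc (c - d) x) = x" by simp
      then show False using subspace_scale[OF sI h, of "inverse (c - d)"] x by simp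
    qed
  qed
  have P5: "T (trivial_cocycle sc I x) = ((\<lambda>a b. 0), 1)"
  proof -
    have "x_coeff sc I x a = 0" if "a \<in> I" for a using coef[of a 0] that by simp
    moreover have "x_coeff sc I x x = 1" using coef[of x 1] subspace_0[OF sI] by simp
    ultimately show ?thesis unfolding T_def trivial_cocycle_def by (auto simp: fun_eq_iff)
  qed
  show "\<exists>T. (\<forall>\<phi>\<in>Z2comm sc br UNIV. T \<phi> \<in> Z2comm sc br I \<times> UNIV) \<and> (\<forall>\<phi>\<in>Z2comm sc br UNIV. \<forall>\<psi>\<in>Z2comm sc br UNIV. T (\<lambda>a b. \<phi> a b + \<psi> a b) = ((\<lambda>a b. fst (T \<phi>) a b + fst (T \<psi>) a b), snd (T \<phi>) + snd (T \<psi>))) \<and> (\<forall>t. \<forall>\<phi>\<in>Z2comm sc br UNIV. T (\<lambda>a b. t * \<phi> a b) = ((\<lambda>a b. t * fst (T \<phi>) a b), t * snd (T \<phi>))) \<and> inj_on T (Z2comm sc br UNIV) \<and> T (trivial_cocycle sc I x) = ((\<lambda>a b. 0), 1)"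
    using P1 P2 P3 P4 P5 by blast
qed

end
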